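(* For every integer $d\ge0$ and every integer $a\ge\max(2,2d-1)$, there exists a constructible $6$-labeled graph $H_{d,a}$ in which half of the vertices have label $1$ and half have label $2$, such that (i) $|V(H_{d,a})|\le 8a^d-6$, and (ii) for every partial orientation $\vec{G}$ of $H_{d,a}$ of maximum outdegree less than $d$, there exist vertices $u$ and $v$ of labels $1$ and $2$ respectively, at distance exactly two in $H_{d,a}$, such that for every common neighbor $x$ of $u$ and $v$ we have $(u,x)\notin E(\vec{G})$ and $(v,x)\notin E(\vec{G})$.
   Context: All graphs are finite, simple and undirected. A partial orientation of a graph $G$ is a directed graph $\vec{G}$ on $V(G)$ such that every $(u,v)\in E(\vec{G})$ satisfies $uv\in E(G)$ (each edge may be directed in neither, one, or both directions). A $k$-labeled graph is a graph in which each vertex receives a label from $[k]$ (labels may repeat, not all need be used). The constructible $k$-labeled graphs are the smallest family such that: every one-vertex $k$-labeled graph is constructible; the disjoint union of at least two constructible $k$-labeled graphs is constructible; if $G'$ is constructible and $i,j\in[k]$, the graph obtained by changing all labels $i$ to $j$ is constructible; and if $G'$ is constructible and $i,j\in[k]$, the graph obtained by adding all edges between vertices with labels $i$ and $j$ is constructible. *)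

theory Defs
  imports Main
begin

text \<open>A k-labeled graph is a triple (V, E, lab): a finite vertex set V of naturals,
 a symmetric irreflexive edge relation E \<subseteq> V \<times> V (as a set of ordered pairs),
 and a labelling lab (only its values on V matter).\<close>

definition add_label_edges :: "nat set \<Rightarrow> (nat \<times> nat) set \<Rightarrow> (nat \<Rightarrow> nat) \<Rightarrow> nat \<Rightarrow> nat \<Rightarrow> (nat \<times> nat) set" where
  "add_label_edges V E lab i j = E \<union> {(u, v). u \<in> V \<and> v \<in> V \<and> u \<noteq> v \<and>
      ((lab u = i \<and> lab v = j) \<or> (lab u = j \<and> lab v = i))}"

definition relabel :: "(nat \<Rightarrow> nat) \<Rightarrow> nat \<Rightarrow> nat \<Rightarrow> nat \<Rightarrow> nat" where
  "relabel lab i j = (\<lambda>v. if lab v = i then j else lab v)"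

inductive constructible :: "nat \<Rightarrow> nat set \<Rightarrow> (nat \<times> nat) set \<Rightarrow> (nat \<Rightarrow> nat) \<Rightarrow> bool"
  for k :: nat where
  single: "lab v \<in> {1..k} \<Longrightarrow> constructible k {v} {} lab"
| union: "constructible k V1 E1 lab1 \<Longrightarrow> constructible k V2 E2 lab2 \<Longrightarrow> V1 \<inter> V2 = {} \<Longrightarrow>
          constructible k (V1 \<union> V2) (E1 \<union> E2) (\<lambda>x. if x \<in> V1 then lab1 x else lab2 x)"
| relab: "constructible k V E lab \<Longrightarrow> i \<in> {1..k} \<Longrightarrow> j \<in> {1..k} \<Longrightarrow>
          constructible k V E (relabel lab i j)"
| join: "constructible k V E lab \<Longrightarrow> i \<in> {1..k} \<Longrightarrow> j \<in> {1..k} \<Longrightarrow>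
          constructible k V (add_label_edges V E lab i j) lab"
| iso: "constructible k V E lab \<Longrightarrow> bij_betw f V V' \<Longrightarrow>
          E' = (\<lambda>(a, b). (f a, f b)) ` E \<Longrightarrow> (\<forall>v\<in>V. lab' (f v) = lab v) \<Longrightarrow>
          constructible k V' E' lab'"

text \<open>Partial orientation: any set of directed pairs along edges (both directions allowed).\<close>
definition partial_orientation :: "(nat \<times> nat) set \<Rightarrow> (nat \<times> nat) set \<Rightarrow> bool" where
  "partial_orientation E D \<longleftrightarrow> D \<subseteq> E"

definition outdeg :: "(nat \<times> nat) set \<Rightarrow> nat \<Rightarrow> nat" where
  "outdeg D u = card {x. (u, x) \<in> D}"

definition common_nbrs :: "(nat \<times> nat) set \<Rightarrow> nat \<Rightarrow> nat \<Rightarrow> nat set" where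
  "common_nbrs E u v = {x. (u, x) \<in> E \<and> (v, x) \<in> E}"

definition dist_two :: "(nat \<times> nat) set \<Rightarrow> nat \<Rightarrow> nat \<Rightarrow> bool" where
  "dist_two E u v \<longleftrightarrow> u \<noteq> v \<and> (u, v) \<notin> E \<and> common_nbrs E u v \<noteq> {}"

end

theory Submission
  imports Defs "HOL-Library.Nat_Bijection"
begin

definition old :: "nat \<Rightarrow> nat \<Rightarrow> nat" where "old i v = prod_encode (0, prod_encode (i, v))"
definition XX :: "nat \<Rightarrow> nat" where "XX i = prod_encode (1, i)"
definition YY :: "nat \<Rightarrow> nat" where "YY i = prod_encode (2, i)"
definition RR :: nat where "RR = prod_encode (3, 0)"
definition RS :: nat where "RS = prod_encode (4, 0)"

lemma enc_simps[simp]: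
  "old i v = old j w \<longleftrightarrow> i = j \<and> v = w"
  "XX i = XX j \<longleftrightarrow> i = j" "YY i = YY j \<longleftrightarrow> i = j"
  "old i v \<noteq> XX j" "XX j \<noteq> old i v" "old i v \<noteq> YY j" "YY j \<noteq> old i v"
  "old i v \<noteq> RR" "RR \<noteq> old i v" "old i v \<noteq> RS" "RS \<noteq> old i v"
  "XX i \<noteq> YY j" "YY j \<noteq> XX i" "XX i \<noteq> RR" "RR \<noteq> XX i" "XX i \<noteq> RS" "RS \<noteq> XX i"
  "YY i \<noteq> RR" "RR \<noteq> YY i" "YY i \<noteq> RS" "RS \<noteq> YY i" "RR \<noteq> RS" "RS \<noteq> RR"
  by (auto simp: old_def XX_def YY_def RR_def RS_def)

definition labN :: "(nat \<Rightarrow> nat) \<Rightarrow> nat \<Rightarrow> nat" where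
  "labN lab w = (case prod_decode w of (t, c) \<Rightarrow> if t = 0 then lab (snd (prod_decode c))
     else if t = 1 \<or> t = 3 then 1 else 2)"

definition L5 :: "(nat \<Rightarrow> nat) \<Rightarrow> nat \<Rightarrow> nat" where
  "L5 lab w = (case prod_decode w of (t, c) \<Rightarrow> if t = 0 then (if lab (snd (prod_decode c)) = 1 then 5 else 6)
     else if t = 1 then 3 else if t = 2 then 4 else 1)"

lemma lab_simps[simp]:
  "labN lab (old i v) = lab v" "labN lab (XX i) = 1" "labN lab (YY i) = 2"
  "labN lab RR = 1" "labN lab RS = 2"
  "L5 lab (old i v) = (if lab v = 1 then 5 else 6)" "L5 lab (XX i) = 3" "L5 lab (YY i) = 4"
  by (auto simp: labN_def L5_def old_def XX_def YY_def RR_def RS_def)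

lemma inj_old: "inj (old i)" by (auto intro: injI)
lemma inj_old2: "inj (\<lambda>(i, v). old i v)" by (auto intro!: injI)
lemma inj_XX: "inj XX" by (auto intro: injI)
lemma inj_YY: "inj YY" by (auto intro: injI)

lemma c_cong:
  assumes "constructible k V E lab" "E' = E" "V' = V" "\<forall>v\<in>V. lab' v = lab v"
  shows "constructible k V' E' lab'"
proof (rule constructible.iso[OF assms(1), of id])
  show "bij_betw id V V'" using assms by simp
  show "E' = (\<lambda>(a, b). (id a, id b)) ` E" using assms by auto
  show "\<forall>v\<in>V. lab' (id v) = lab v" using assms by simp
qed

lemma c_relab:
  assumes "constructible k V E lab" "i \<in> {1..k}" "j \<in> {1..k}" "\<forall>v\<in>V. lab' v = relabel lab i j v"
  shows "constructible k V E lab'"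
  using c_cong[OF constructible.relab[OF assms(1-3)]] assms(4) by auto

lemma c_add:
  assumes c: "constructible k V E lab" and w: "w \<notin> V" and ij: "i \<in> {1..k}" "j \<in> {1..k}" "i \<noteq> j"
    and nl: "\<forall>v\<in>V. lab v \<noteq> i"
  shows "constructible k (insert w V)
     (E \<union> {(w, v) |v. v \<in> V \<and> lab v = j} \<union> {(v, w) |v. v \<in> V \<and> lab v = j}) (lab(w := i))"
proof -
  have s: "constructible k {w} {} (lab(w := i))" by (rule constructible.single) (use ij in simp)
  have u: "constructible k (V \<union> {w}) (E \<union> {}) (\<lambda>x. if x \<in> V then lab x else (lab(w := i)) x)"
    by (rule constructible.union[OF c s]) (use w in auto)
  define L where "L = (\<lambda>x. if x \<in> V then lab x else (lab(w := i)) x)"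
  have jn: "constructible k (V \<union> {w}) (add_label_edges (V \<union> {w}) (E \<union> {}) L i j) L"
    using constructible.join[OF u[folded L_def] ij(1,2)] .
  show ?thesis
  proof (rule c_cong[OF jn])
    show "E \<union> {(w, v) |v. v \<in> V \<and> lab v = j} \<union> {(v, w) |v. v \<in> V \<and> lab v = j} =
      add_label_edges (V \<union> {w}) (E \<union> {}) L i j"
      unfolding add_label_edges_def L_def using w nl ij(3) by auto
  qed (use w in \<open>auto simp: L_def\<close>)
qed

lemma c_union_family:
  fixes n :: nat
  assumes "\<forall>i<n. constructible k (VV i) (EE i) L" "\<forall>i<n. \<forall>j<n. i \<noteq> j \<longrightarrow> VV i \<inter> VV j = {}" "n \<ge> 1"
  shows "constructible k (\<Union>i<n. VV i) (\<Union>i<n. EE i) L"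
  using assms
proof (induction n)
  case 0 then show ?case by simp
next
  case (Suc n)
  show ?case
  proof (cases "n = 0")
    case True
    then show ?thesis using Suc.prems by (auto intro: c_cong)
  next
    case False
    have ih: "constructible k (\<Union>i<n. VV i) (\<Union>i<n. EE i) L" using Suc False by auto
    have cn: "constructible k (VV n) (EE n) L" using Suc.prems by auto
    have dj: "(\<Union>i<n. VV i) \<inter> VV n = {}" proof (intro equals0I)
      fix x assume "x \<in> (\<Union>i<n. VV i) \<inter> VV n"
      then obtain i where "i < n" "x \<in> VV i" "x \<in> VV n" by auto
      then show False using Suc.prems(2)[rule_format, of i n] by auto
    qed
    show ?thesis
      by (rule c_cong[OF constructible.union[OF ih cn dj]]) (auto simp: lessThan_Suc)
  qed
qed


definition VK :: "nat set \<Rightarrow> nat \<Rightarrow> nat set" where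
  "VK V i = insert (YY i) (insert (XX i) (old i ` V))"

definition EK :: "nat set \<Rightarrow> (nat \<times> nat) set \<Rightarrow> (nat \<Rightarrow> nat) \<Rightarrow> nat \<Rightarrow> (nat \<times> nat) set" where
  "EK V E lab i = (\<lambda>(u, v). (old i u, old i v)) ` E
     \<union> {(XX i, old i v) |v. v \<in> V \<and> lab v = 2} \<union> {(old i v, XX i) |v. v \<in> V \<and> lab v = 2}
     \<union> {(YY i, old i v) |v. v \<in> V \<and> lab v = 1} \<union> {(old i v, YY i) |v. v \<in> V \<and> lab v = 1}"

definition Vn :: "nat \<Rightarrow> nat set \<Rightarrow> nat set" where
  "Vn a V = insert RS (insert RR (\<Union>i<a. VK V i))"

definition En :: "nat \<Rightarrow> nat set \<Rightarrow> (nat \<times> nat) set \<Rightarrow> (nat \<Rightarrow> nat) \<Rightarrow> (nat \<times> nat) set" where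
  "En a V E lab = (\<Union>i<a. EK V E lab i)
     \<union> {(RR, XX i) |i. i < a} \<union> {(XX i, RR) |i. i < a}
     \<union> {(RS, YY i) |i. i < a} \<union> {(YY i, RS) |i. i < a}"

lemma constr_K:
  assumes c: "constructible 6 V E lab" and l: "\<forall>v\<in>V. lab v \<in> {1, 2}"
  shows "constructible 6 (VK V i) (EK V E lab i) (L5 lab)"
proof -
  have h1: "constructible 6 (old i ` V) ((\<lambda>(u, v). (old i u, old i v)) ` E) (labN lab)"
    by (rule constructible.iso[OF c, of "old i"]) (auto simp: bij_betw_def inj_on_def)
  have h2: "constructible 6 (insert (XX i) (old i ` V))
     ((\<lambda>(u, v). (old i u, old i v)) ` E \<union> {(XX i, v) |v. v \<in> old i ` V \<and> labN lab v = 2}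
        \<union> {(v, XX i) |v. v \<in> old i ` V \<and> labN lab v = 2}) ((labN lab)(XX i := 3))"
    by (rule c_add[OF h1]) (use l in auto)
  have h3: "constructible 6 (insert (YY i) (insert (XX i) (old i ` V)))
     ((\<lambda>(u, v). (old i u, old i v)) ` E \<union> {(XX i, v) |v. v \<in> old i ` V \<and> labN lab v = 2}
        \<union> {(v, XX i) |v. v \<in> old i ` V \<and> labN lab v = 2}
      \<union> {(YY i, v) |v. v \<in> insert (XX i) (old i ` V) \<and> ((labN lab)(XX i := 3)) v = 1}
      \<union> {(v, YY i) |v. v \<in> insert (XX i) (old i ` V) \<and> ((labN lab)(XX i := 3)) v = 1})
     ((labN lab)(XX i := 3, YY i := 4))" (is "constructible _ _ ?E _")
    by (rule c_add[OF h2]) (use l in auto)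
  have h4: "constructible 6 (insert (YY i) (insert (XX i) (old i ` V)))
     ((\<lambda>(u, v). (old i u, old i v)) ` E \<union> {(XX i, v) |v. v \<in> old i ` V \<and> labN lab v = 2}
        \<union> {(v, XX i) |v. v \<in> old i ` V \<and> labN lab v = 2}
      \<union> {(YY i, v) |v. v \<in> insert (XX i) (old i ` V) \<and> ((labN lab)(XX i := 3)) v = 1}
      \<union> {(v, YY i) |v. v \<in> insert (XX i) (old i ` V) \<and> ((labN lab)(XX i := 3)) v = 1})
     (relabel (relabel ((labN lab)(XX i := 3, YY i := 4)) 1 5) 2 6)"
    by (rule constructible.relab[OF constructible.relab[OF h3]]) auto
  show ?thesis
  proof (rule c_cong[OF h4])
    show "EK V E lab i = ?E"
      unfolding EK_def using l by (auto; metis enc_simps(4) imageI lab_simps(1))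
  qed (use l in \<open>auto simp: VK_def relabel_def\<close>)
qed

lemma constr_step:
  assumes c: "constructible 6 V E lab" and l: "\<forall>v\<in>V. lab v \<in> {1, 2}" and a: "a \<ge> 1"
  shows "constructible 6 (Vn a V) (En a V E lab) (labN lab)"
proof -
  have u: "constructible 6 (\<Union>i<a. VK V i) (\<Union>i<a. EK V E lab i) (L5 lab)"
    by (rule c_union_family) (use constr_K[OF c l] a in \<open>auto simp: VK_def\<close>)
  have nl1: "\<forall>v\<in>(\<Union>i<a. VK V i). L5 lab v \<noteq> 1" by (auto simp: VK_def)
  have r1: "constructible 6 (insert RR (\<Union>i<a. VK V i))
     ((\<Union>i<a. EK V E lab i) \<union> {(RR, v) |v. v \<in> (\<Union>i<a. VK V i) \<and> L5 lab v = 3}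
       \<union> {(v, RR) |v. v \<in> (\<Union>i<a. VK V i) \<and> L5 lab v = 3}) ((L5 lab)(RR := 1))"
    by (rule c_add[OF u]) (use nl1 in \<open>auto simp: VK_def\<close>)
  have nl2: "\<forall>v\<in>insert RR (\<Union>i<a. VK V i). ((L5 lab)(RR := 1)) v \<noteq> 2" by (auto simp: VK_def)
  have r2: "constructible 6 (insert RS (insert RR (\<Union>i<a. VK V i)))
     ((\<Union>i<a. EK V E lab i) \<union> {(RR, v) |v. v \<in> (\<Union>i<a. VK V i) \<and> L5 lab v = 3}
       \<union> {(v, RR) |v. v \<in> (\<Union>i<a. VK V i) \<and> L5 lab v = 3}
       \<union> {(RS, v) |v. v \<in> insert RR (\<Union>i<a. VK V i) \<and> ((L5 lab)(RR := 1)) v = 4}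
       \<union> {(v, RS) |v. v \<in> insert RR (\<Union>i<a. VK V i) \<and> ((L5 lab)(RR := 1)) v = 4})
      ((L5 lab)(RR := 1, RS := 2))" (is "constructible _ _ ?E _")
    by (rule c_add[OF r1]) (use nl2 in \<open>auto simp: VK_def\<close>)
  have r3: "constructible 6 (insert RS (insert RR (\<Union>i<a. VK V i))) ?E
     (relabel (relabel (relabel (relabel ((L5 lab)(RR := 1, RS := 2)) 3 1) 4 2) 5 1) 6 2)"
    by (rule constructible.relab[OF constructible.relab[OF constructible.relab[OF constructible.relab[OF r2]]]]) auto
  show ?thesis
  proof (rule c_cong[OF r3])
    have e1: "{(RR, v) |v. v \<in> (\<Union>i<a. VK V i) \<and> L5 lab v = 3} = {(RR, XX i) |i. i < a}"
      "{(v, RR) |v. v \<in> (\<Union>i<a. VK V i) \<and> L5 lab v = 3} = {(XX i, RR) |i. i < a}"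
      by (auto simp: VK_def split: if_splits)
    have e2: "{(RS, v) |v. v \<in> insert RR (\<Union>i<a. VK V i) \<and> ((L5 lab)(RR := 1)) v = 4} = {(RS, YY i) |i. i < a}"
      by (auto simp: VK_def split: if_splits; (rule exI[of _ "YY _"]; auto))
    have e3: "{(v, RS) |v. v \<in> insert RR (\<Union>i<a. VK V i) \<and> ((L5 lab)(RR := 1)) v = 4} = {(YY i, RS) |i. i < a}"
      by (auto simp: VK_def split: if_splits; (rule exI[of _ "YY _"]; auto))
    show "En a V E lab = ?E"
      unfolding En_def e1 e2 e3 by blast
  qed (use l in \<open>auto simp: Vn_def VK_def relabel_def\<close>)
qed


lemma Vn_alt: "Vn a V = (\<lambda>(i, v). old i v) ` ({..<a} \<times> V) \<union> XX ` {..<a} \<union> YY ` {..<a} \<union> {RR, RS}"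
  by (auto simp: Vn_def VK_def)

lemma card_old: "finite S \<Longrightarrow> card ((\<lambda>(i, v). old i v) ` ({..<a} \<times> S)) = a * card S"
  by (subst card_image) (auto simp: inj_on_def card_cartesian_product)

lemma card_Vn:
  assumes "finite V"
  shows "card (Vn a V) = a * card V + a + a + 2"
proof -
  have "card (Vn a V) = card ((\<lambda>(i, v). old i v) ` ({..<a} \<times> V)) + card (XX ` {..<a}) + card (YY ` {..<a}) + card {RR, RS}"
    unfolding Vn_alt
    by (subst card_Un_disjoint, use assms in auto)+
  also have "\<dots> = a * card V + a + a + 2"
    using assms by (simp add: card_old card_image inj_on_def)
  finally show ?thesis .
qed

lemma card_lab1:
  assumes "finite V"
  shows "card {w \<in> Vn a V. labN lab w = 1} = a * card {v \<in> V. lab v = 1} + a + 1"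
proof -
  have eq: "{w \<in> Vn a V. labN lab w = 1} = (\<lambda>(i, v). old i v) ` ({..<a} \<times> {v \<in> V. lab v = 1}) \<union> XX ` {..<a} \<union> {RR}"
    unfolding Vn_alt by auto
  have "card {w \<in> Vn a V. labN lab w = 1} = card ((\<lambda>(i, v). old i v) ` ({..<a} \<times> {v \<in> V. lab v = 1})) + card (XX ` {..<a}) + card {RR}"
    unfolding eq
    by (subst card_Un_disjoint, use assms in auto)+
  also have "\<dots> = a * card {v \<in> V. lab v = 1} + a + 1"
    using assms by (simp add: card_old card_image inj_on_def)
  finally show ?thesis .
qed

lemma card_lab2:
  assumes "finite V"
  shows "card {w \<in> Vn a V. labN lab w = 2} = a * card {v \<in> V. lab v = 2} + a + 1"
proof -
  have eq: "{w \<in> Vn a V. labN lab w = 2} = (\<lambda>(i, v). old i v) ` ({..<a} \<times> {v \<in> V. lab v = 2}) \<union> YY ` {..<a} \<union> {RS}"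
    unfolding Vn_alt by auto
  have "card {w \<in> Vn a V. labN lab w = 2} = card ((\<lambda>(i, v). old i v) ` ({..<a} \<times> {v \<in> V. lab v = 2})) + card (YY ` {..<a}) + card {RS}"
    unfolding eq
    by (subst card_Un_disjoint, use assms in auto)+
  also have "\<dots> = a * card {v \<in> V. lab v = 2} + a + 1"
    using assms by (simp add: card_old card_image inj_on_def)
  finally show ?thesis .
qed

lemma finite_Vn: "finite V \<Longrightarrow> finite (Vn a V)"
  unfolding Vn_alt by auto

lemma labs_Vn: "\<forall>v\<in>V. lab v \<in> {1, 2} \<Longrightarrow> \<forall>w\<in>Vn a V. labN lab w \<in> {1, 2}"
  unfolding Vn_alt by auto

lemma En_sub: "E \<subseteq> V \<times> V \<Longrightarrow> En a V E lab \<subseteq> Vn a V \<times> Vn a V"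
  unfolding En_def EK_def Vn_alt by auto


lemma En_RR: "(RR, y) \<in> En a V E lab \<longleftrightarrow> (\<exists>i<a. y = XX i)"
  unfolding En_def EK_def by auto

lemma En_RS: "(RS, y) \<in> En a V E lab \<longleftrightarrow> (\<exists>i<a. y = YY i)"
  unfolding En_def EK_def by auto

lemma En_old: "i < a \<Longrightarrow> (old i u, y) \<in> En a V E lab \<longleftrightarrow>
   (\<exists>w. y = old i w \<and> (u, w) \<in> E) \<or> (y = XX i \<and> u \<in> V \<and> lab u = 2) \<or> (y = YY i \<and> u \<in> V \<and> lab u = 1)"
  unfolding En_def EK_def by auto


definition good :: "nat \<Rightarrow> nat set \<Rightarrow> (nat \<times> nat) set \<Rightarrow> (nat \<Rightarrow> nat) \<Rightarrow> bool" where
  "good d V E lab \<longleftrightarrow> (\<forall>D. partial_orientation E D \<and> (\<forall>u\<in>V. outdeg D u < d) \<longrightarrow>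
              (\<exists>u\<in>V. \<exists>v\<in>V. lab u = 1 \<and> lab v = 2 \<and> dist_two E u v \<and>
                 (\<forall>x\<in>common_nbrs E u v. (u, x) \<notin> D \<and> (v, x) \<notin> D)))"

lemma good_step:
  assumes g: "good d V E lab" and EV: "E \<subseteq> V \<times> V" and fin: "finite V"
    and l: "\<forall>v\<in>V. lab v \<in> {1, 2}" and a: "2 * d < a"
  shows "good (Suc d) (Vn a V) (En a V E lab) (labN lab)"
  unfolding good_def
proof (intro allI impI, elim conjE)
  fix D
  assume po: "partial_orientation (En a V E lab) D" and od: "\<forall>u\<in>Vn a V. outdeg D u < Suc d"
  let ?E = "En a V E lab"
  have DE: "D \<subseteq> ?E" using po by (simp add: partial_orientation_def)
  have finE: "finite ?E" using En_sub[OF EV] finite_Vn[OF fin]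
    by (meson finite_SigmaI finite_subset)
  have fo: "finite {y. (w, y) \<in> D}" for w
  proof (rule finite_subset[of _ "snd ` ?E"])
    show "{y. (w, y) \<in> D} \<subseteq> snd ` ?E" using DE by force
  qed (use finE in simp)
  have RRV: "RR \<in> Vn a V" "RS \<in> Vn a V" by (auto simp: Vn_def)
  define A where "A = {i. i < a \<and> (RR, XX i) \<in> D}"
  define B where "B = {i. i < a \<and> (RS, YY i) \<in> D}"
  have cA: "card A \<le> d"
  proof -
    have "card A = card (XX ` A)" by (simp add: card_image inj_on_def)
    also have "\<dots> \<le> card {y. (RR, y) \<in> D}"
      by (rule card_mono[OF fo]) (auto simp: A_def)
    also have "\<dots> < Suc d" using od RRV by (simp add: outdeg_def)
    finally show ?thesis by simp
  qed
  have cB: "card B \<le> d"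
  proof -
    have "card B = card (YY ` B)" by (simp add: card_image inj_on_def)
    also have "\<dots> \<le> card {y. (RS, y) \<in> D}"
      by (rule card_mono[OF fo]) (auto simp: B_def)
    also have "\<dots> < Suc d" using od RRV by (simp add: outdeg_def)
    finally show ?thesis by simp
  qed
  obtain i where i: "i < a" "i \<notin> A" "i \<notin> B"
  proof -
    have "\<not> {..<a} \<subseteq> A \<union> B"
    proof
      assume "{..<a} \<subseteq> A \<union> B"
      then have "card {..<a} \<le> card (A \<union> B)"
        by (rule card_mono[rotated]) (auto simp: A_def B_def)
      also have "\<dots> \<le> card A + card B" by (rule card_Un_le)
      finally show False using cA cB a by simp
    qed
    then show ?thesis using that by auto
  qed
  have nRX: "(RR, XX i) \<notin> D" and nRY: "(RS, YY i) \<notin> D" using i by (auto simp: A_def B_def)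
  show "\<exists>u\<in>Vn a V. \<exists>v\<in>Vn a V. labN lab u = 1 \<and> labN lab v = 2 \<and> dist_two ?E u v \<and>
                 (\<forall>x\<in>common_nbrs ?E u v. (u, x) \<notin> D \<and> (v, x) \<notin> D)"
  proof (cases "\<exists>v\<in>V. lab v = 2 \<and> (old i v, XX i) \<notin> D")
    case True
    then obtain v where v: "v \<in> V" "lab v = 2" "(old i v, XX i) \<notin> D" by auto
    have cn: "common_nbrs ?E RR (old i v) = {XX i}"
      unfolding common_nbrs_def using i(1) v by (auto simp: En_RR En_old)
    show ?thesis
    proof (intro bexI conjI)
      show "dist_two ?E RR (old i v)" unfolding dist_two_def cn using i(1) by (auto simp: En_RR)
      show "\<forall>x\<in>common_nbrs ?E RR (old i v). (RR, x) \<notin> D \<and> (old i v, x) \<notin> D"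
        unfolding cn using nRX v by auto
    qed (use v i in \<open>auto simp: Vn_def VK_def\<close>)
  next
    case F1: False
    show ?thesis
    proof (cases "\<exists>u\<in>V. lab u = 1 \<and> (old i u, YY i) \<notin> D")
      case True
      then obtain u where u: "u \<in> V" "lab u = 1" "(old i u, YY i) \<notin> D" by auto
      have cn: "common_nbrs ?E (old i u) RS = {YY i}"
        unfolding common_nbrs_def using i(1) u by (auto simp: En_RS En_old)
      show ?thesis
      proof (intro bexI conjI)
        show "dist_two ?E (old i u) RS" unfolding dist_two_def cn using i(1) by (auto simp: En_old)
        show "\<forall>x\<in>common_nbrs ?E (old i u) RS. (old i u, x) \<notin> D \<and> (RS, x) \<notin> D"
          unfolding cn using nRY u by auto
      qed (use u i in \<open>auto simp: Vn_def VK_def\<close>)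
    next
      case F2: False
      define D0 where "D0 = {(u, w). (u, w) \<in> E \<and> (old i u, old i w) \<in> D}"
      have po0: "partial_orientation E D0" by (auto simp: partial_orientation_def D0_def)
      have od0: "\<forall>u\<in>V. outdeg D0 u < d"
      proof
        fix u assume u: "u \<in> V"
        define Z where "Z = (if lab u = 1 then YY i else XX i)"
        have Zin: "(old i u, Z) \<in> D" using F1 F2 u l by (auto simp: Z_def)
        have uV: "old i u \<in> Vn a V" using u i by (auto simp: Vn_def VK_def)
        have "outdeg D0 u = card (old i ` {x. (u, x) \<in> D0})"
          by (simp add: outdeg_def card_image inj_on_def)
        also have "\<dots> \<le> card ({y. (old i u, y) \<in> D} - {Z})"
          by (rule card_mono) (use fo in \<open>auto simp: D0_def Z_def\<close>)
        also have "\<dots> = card {y. (old i u, y) \<in> D} - 1"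
          using Zin fo by simp
        also have "\<dots> < d"
        proof -
          have "card {y. (old i u, y) \<in> D} < Suc d" using od uV by (simp add: outdeg_def)
          moreover have "card {y. (old i u, y) \<in> D} > 0" using Zin fo[of "old i u"] card_gt_0_iff by blast
          ultimately show ?thesis by linarith
        qed
        finally show "outdeg D0 u < d" .
      qed
      obtain u v where uv: "u \<in> V" "v \<in> V" "lab u = 1" "lab v = 2" "dist_two E u v"
        and nd: "\<forall>x\<in>common_nbrs E u v. (u, x) \<notin> D0 \<and> (v, x) \<notin> D0"
        using g po0 od0 unfolding good_def by blast
      have cn: "common_nbrs ?E (old i u) (old i v) = old i ` common_nbrs E u v"
        unfolding common_nbrs_def using i(1) uv(3,4) by (auto simp: En_old)
      show ?thesis
      proof (intro bexI conjI)
        show "dist_two ?E (old i u) (old i v)" using uv(5) i(1) unfolding dist_two_def cn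
          by (auto simp: En_old)
        show "\<forall>x\<in>common_nbrs ?E (old i u) (old i v). (old i u, x) \<notin> D \<and> (old i v, x) \<notin> D"
          unfolding cn using nd by (auto simp: D0_def common_nbrs_def)
      qed (use uv i in \<open>auto simp: Vn_def VK_def\<close>)
    qed
  qed
qed


definition inv :: "nat \<Rightarrow> nat \<Rightarrow> nat set \<Rightarrow> (nat \<times> nat) set \<Rightarrow> (nat \<Rightarrow> nat) \<Rightarrow> bool" where
  "inv a d V E lab \<longleftrightarrow> constructible 6 V E lab \<and> finite V \<and> E \<subseteq> V \<times> V \<and> (\<forall>v\<in>V. lab v \<in> {1, 2}) \<and>
     2 * card {v \<in> V. lab v = 1} = card V \<and> 2 * card {v \<in> V. lab v = 2} = card V \<and>
     int (card V) \<le> 8 * int a ^ d - 6 \<and> good d V E lab"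

lemma inv_base: "\<exists>V E lab. inv a 0 V E lab"
proof -
  define lab :: "nat \<Rightarrow> nat" where "lab = (\<lambda>x. if x = 0 then 1 else 2)"
  have c0: "constructible 6 {0} {} lab" by (rule constructible.single) (simp add: lab_def)
  have c1: "constructible 6 {1} {} lab" by (rule constructible.single) (simp add: lab_def)
  have c: "constructible 6 {0, 1} {} lab"
    by (rule c_cong[OF constructible.union[OF c0 c1]]) auto
  have e1: "{v \<in> {0, 1::nat}. lab v = 1} = {0}" by (auto simp: lab_def)
  have e2: "{v \<in> {0, 1::nat}. lab v = 2} = {1}" by (auto simp: lab_def)
  have g: "good 0 {0, 1} {} lab" unfolding good_def by auto
  have l0: "lab 0 = 1" and l1: "lab (Suc 0) = 2" by (simp_all add: lab_def)
  show ?thesis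
    by (rule exI[of _ "{0, 1}"], rule exI[of _ "{}"], rule exI[of _ lab])
      (simp only: inv_def c e1 e2 g, simp add: l0 l1)
qed

lemma inv_step:
  assumes "inv a d V E lab" "2 * d < a" "a \<ge> 2"
  shows "inv a (Suc d) (Vn a V) (En a V E lab) (labN lab)"
proof -
  have c: "constructible 6 V E lab" and fin: "finite V" and EV: "E \<subseteq> V \<times> V"
    and l: "\<forall>v\<in>V. lab v \<in> {1, 2}" and h1: "2 * card {v \<in> V. lab v = 1} = card V"
    and h2: "2 * card {v \<in> V. lab v = 2} = card V" and b: "int (card V) \<le> 8 * int a ^ d - 6"
    and g: "good d V E lab"
    using assms(1) unfolding inv_def by auto
  have a1: "a \<ge> 1" using assms(2) by simp
  have bnd: "int (card (Vn a V)) \<le> 8 * int a ^ Suc d - 6"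
  proof -
    have "int (card (Vn a V)) = int a * int (card V) + 2 * int a + 2"
      using card_Vn[OF fin, of a] by simp
    also have "\<dots> \<le> int a * (8 * int a ^ d - 6) + 2 * int a + 2"
      using mult_left_mono[OF b, of "int a"] by simp
    also have "\<dots> = 8 * int a ^ Suc d - 4 * int a + 2" by (simp add: algebra_simps)
    also have "\<dots> \<le> 8 * int a ^ Suc d - 6" using assms(3) by simp
    finally show ?thesis .
  qed
  show ?thesis unfolding inv_def
  proof (intro conjI)
    show "constructible 6 (Vn a V) (En a V E lab) (labN lab)" by (rule constr_step[OF c l a1])
    show "2 * card {v \<in> Vn a V. labN lab v = 1} = card (Vn a V)"
      using card_lab1[OF fin, of a lab] card_Vn[OF fin, of a] h1
      by (simp add: algebra_simps; metis mult.left_commute)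
    show "2 * card {v \<in> Vn a V. labN lab v = 2} = card (Vn a V)"
      using card_lab2[OF fin, of a lab] card_Vn[OF fin, of a] h2
      by (simp add: algebra_simps; metis mult.left_commute)
    show "good (Suc d) (Vn a V) (En a V E lab) (labN lab)"
      by (rule good_step[OF g EV fin l assms(2)])
  qed (use bnd finite_Vn[OF fin] En_sub[OF EV] labs_Vn[OF l] in auto)
qed

lemma inv_all: "a \<ge> 2 \<Longrightarrow> a \<ge> 2 * d - 1 \<Longrightarrow> \<exists>V E lab. inv a d V E lab"
proof (induction d)
  case 0 then show ?case using inv_base by blast
next
  case (Suc d)
  then obtain V E lab where "inv a d V E lab" by fastforce
  moreover have "2 * d < a" using Suc.prems by simp
  ultimately show ?case using inv_step Suc.prems by blast
qed

theorem lemma32: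
  fixes d a :: nat
  assumes "a \<ge> 2" and "a \<ge> 2 * d - 1"
  shows "\<exists>V E lab. constructible 6 V E lab \<and>
           2 * card {v \<in> V. lab v = 1} = card V \<and>
           2 * card {v \<in> V. lab v = 2} = card V \<and>
           int (card V) \<le> 8 * int a ^ d - 6 \<and>
           (\<forall>D. partial_orientation E D \<and> (\<forall>u\<in>V. outdeg D u < d) \<longrightarrow>
              (\<exists>u\<in>V. \<exists>v\<in>V. lab u = 1 \<and> lab v = 2 \<and> dist_two E u v \<and>
                 (\<forall>x\<in>common_nbrs E u v. (u, x) \<notin> D \<and> (v, x) \<notin> D)))"
proof -
  obtain V E lab where "inv a d V E lab" using inv_all[OF assms] by blast
  then show ?thesis unfolding inv_def good_def by blast
qed

end
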